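(* Let $f,g\in\mathbb L^2([0,1])$ with $\Delta=\|f-g\|>0$, and let $X$ be distributed according to the model below. Then for all $\epsilon<1/4$, \[ \mathbb P\Big(\big|\eta(X)-\tfrac12\big|\le\epsilon\Big)\ge(2\pi)^{-1/2}\Big[\frac\epsilon\Delta e^{-(1+\Delta/2)^2/2}\wedge\frac{e^{-1/2}}2\Big]. \]
   Context: Model: $Y\sim\mathrm{Bernoulli}(1/2)$ independent of a standard Brownian motion $W$ on $[0,1]$, and $dX(t)=Yf(t)\,dt+(1-Y)g(t)\,dt+dW(t)$. Regression function $\eta(X)=\mathbb P(Y=1\mid X)=\dfrac{\exp(\int_0^1(f-g)\,dX-\frac12\|f\|^2+\frac12\|g\|^2)}{1+\exp(\int_0^1(f-g)\,dX-\frac12\|f\|^2+\frac12\|g\|^2)}$. $\|\cdot\|$ is the $\mathbb L^2([0,1])$ norm; $a\wedge b=\min\{a,b\}$. *)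

theory Defs
  imports "HOL-Probability.Probability"
begin

text \<open>The space L2([0,1]) (as functions; a.e.-equal functions are identified only through the
isonormal process, which does not distinguish them), its inner product and norm.\<close>

definition L2_01 :: "(real \<Rightarrow> real) set" where
  "L2_01 = {h. h \<in> borel_measurable lborel \<and>
               set_integrable lborel {0..1} (\<lambda>t. (h t)\<^sup>2)}"

definition L2_inner :: "(real \<Rightarrow> real) \<Rightarrow> (real \<Rightarrow> real) \<Rightarrow> real" where
  "L2_inner h k = (LINT t:{0..1}|lborel. h t * k t)"

definition L2_norm :: "(real \<Rightarrow> real) \<Rightarrow> real" where
  "L2_norm h = sqrt (L2_inner h h)"

text \<open>A standard Brownian motion on [0,1], represented through its Wiener integrals
  W h = \<integral>_0^1 h dW (h in L2([0,1])), i.e. as an isonormal Gaussian process on L2([0,1]):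
  W is a.s. linear and each W h is centred normal with variance \<parallel>h\<parallel>^2.
  (Linearity plus Gaussian marginals makes the family jointly Gaussian with covariance
  the L2 inner product; Brownian motion is W(t) = W(indicator [0,t]).)\<close>

definition isonormal_L2_01 :: "'a measure \<Rightarrow> ((real \<Rightarrow> real) \<Rightarrow> 'a \<Rightarrow> real) \<Rightarrow> bool" where
  "isonormal_L2_01 M W \<longleftrightarrow>
     (\<forall>h\<in>L2_01.
        (L2_norm h = 0 \<longrightarrow> W h \<in> borel_measurable M \<and> (AE \<omega> in M. W h \<omega> = 0)) \<and>
        (L2_norm h > 0 \<longrightarrow> distributed M lborel (W h) (normal_density 0 (L2_norm h)))) \<and>
     (\<forall>h\<in>L2_01. \<forall>k\<in>L2_01. \<forall>a b.
        AE \<omega> in M. W (\<lambda>t. a * h t + b * k t) \<omega> = a * W h \<omega> + b * W k \<omega>)"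

text \<open>The Wiener integral \<integral>_0^1 h dX for dX = Y f dt + (1 - Y) g dt + dW.\<close>

definition int_dX ::
  "(real \<Rightarrow> real) \<Rightarrow> (real \<Rightarrow> real) \<Rightarrow> ('a \<Rightarrow> bool) \<Rightarrow> ((real \<Rightarrow> real) \<Rightarrow> 'a \<Rightarrow> real)
    \<Rightarrow> (real \<Rightarrow> real) \<Rightarrow> 'a \<Rightarrow> real" where
  "int_dX f g Y W h \<omega> =
     of_bool (Y \<omega>) * L2_inner h f + (1 - of_bool (Y \<omega>)) * L2_inner h g + W h \<omega>"

text \<open>The regression function \<eta>(X) = P(Y = 1 | X).\<close>

definition eta_X ::
  "(real \<Rightarrow> real) \<Rightarrow> (real \<Rightarrow> real) \<Rightarrow> ('a \<Rightarrow> bool) \<Rightarrow> ((real \<Rightarrow> real) \<Rightarrow> 'a \<Rightarrow> real)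
    \<Rightarrow> 'a \<Rightarrow> real" where
  "eta_X f g Y W \<omega> =
     (let z = int_dX f g Y W (\<lambda>t. f t - g t) \<omega> - (L2_norm f)\<^sup>2 / 2 + (L2_norm g)\<^sup>2 / 2
      in exp z / (1 + exp z))"

end

theory Submission
  imports Defs
begin

lemma sig_bound: "\<bar>exp z / (1 + exp z) - 1/2\<bar> \<le> \<bar>z\<bar> / 2" for z :: real
proof -
  have p: "1 + exp z > 0" by (simp add: add_pos_pos)
  have e: "exp z / (1 + exp z) - 1/2 = (exp z - 1) / (2 * (1 + exp z))"
    using p by (simp add: field_simps)
  have "\<bar>exp z - 1\<bar> \<le> \<bar>z\<bar> * (1 + exp z)"
  proof (cases "z \<ge> 0")
    case True
    have a: "1 - z \<le> exp (-z)" using exp_ge_add_one_self[of "-z"] by simp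
    have "exp z * (1 - z) \<le> exp z * exp (-z)" using a by (simp add: mult_left_mono)
    also have "\<dots> = 1" by (simp add: exp_minus_inverse)
    finally have "exp z * (1 - z) \<le> 1" .
    moreover have "exp z \<ge> 1" using True by simp
    ultimately show ?thesis using True by (simp add: algebra_simps)
  next
    case False
    have a: "1 + z \<le> exp z" using exp_ge_add_one_self[of z] by simp
    have "exp z \<le> 1" using False by simp
    moreover have "z * exp z \<le> 0" using False by (simp add: mult_nonpos_nonneg)
    ultimately have "1 - exp z \<le> -z * (1 + exp z)" using a unfolding distrib_left by linarith
    then show ?thesis using False \<open>exp z \<le> 1\<close> by simp
  qed
  then have "\<bar>exp z - 1\<bar> / (2 * (1 + exp z)) \<le> \<bar>z\<bar> / 2"
    using p by (simp add: divide_simps algebra_simps)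
  then show ?thesis using e p by (simp add: abs_div)
qed

lemma avg_le: "x \<le> a \<Longrightarrow> x \<le> b \<Longrightarrow> (a + b) / 2 \<le> s \<Longrightarrow> x \<le> (s::real)"
  by (simp add: field_simps)

lemma le4: "(0::real) \<le> y \<Longrightarrow> y \<le> 4 * y" by simp

lemma L2_prod_int:
  assumes "f \<in> L2_01" "g \<in> L2_01"
  shows "set_integrable lborel {0..1} (\<lambda>t. f t * g t)"
proof (rule set_integrable_bound[where f="\<lambda>t. (f t)^2 + (g t)^2"])
  have [measurable]: "f \<in> borel_measurable lborel" "g \<in> borel_measurable lborel"
    using assms unfolding L2_01_def by auto
  show "set_integrable lborel {0..1} (\<lambda>t. (f t)^2 + (g t)^2)"
    using assms unfolding L2_01_def by (intro set_integral_add) auto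
  show "set_borel_measurable lborel {0..1} (\<lambda>t. f t * g t)"
    unfolding set_borel_measurable_def by measurable
  have "\<bar>a * b\<bar> \<le> \<bar>a ^ 2 + b ^ 2\<bar>" for a b :: real
  proof -
    have "0 \<le> (\<bar>a\<bar> - \<bar>b\<bar>)^2" by simp
    then have "2 * (\<bar>a\<bar> * \<bar>b\<bar>) \<le> a^2 + b^2" by (simp add: power2_eq_square algebra_simps)
    moreover have "0 \<le> \<bar>a\<bar> * \<bar>b\<bar>" by simp
    ultimately have "\<bar>a\<bar> * \<bar>b\<bar> \<le> a^2 + b^2" by linarith
    then show ?thesis by (simp add: abs_mult)
  qed
  then show "AE x in lborel. x \<in> {0..1} \<longrightarrow> norm (f x * g x) \<le> norm ((f x)^2 + (g x)^2)"
    by simp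
qed

lemma L2_sq_int:
  assumes "f \<in> L2_01"
  shows "set_integrable lborel {0..1} (\<lambda>t. f t * f t)"
  using assms unfolding L2_01_def by (simp add: power2_eq_square)

lemma L2_norm_sq:
  "(L2_norm h)^2 = L2_inner h h"
proof -
  have "0 \<le> L2_inner h h"
    unfolding L2_inner_def set_lebesgue_integral_def
    by (rule integral_nonneg_AE) (auto simp: indicator_def)
  then show ?thesis unfolding L2_norm_def by simp
qed

lemma L2_ident:
  assumes f: "f \<in> L2_01" and g: "g \<in> L2_01"
  shows "L2_inner (\<lambda>t. f t - g t) f - (L2_norm f)^2 / 2 + (L2_norm g)^2 / 2 = (L2_norm (\<lambda>t. f t - g t))^2 / 2"
    and "L2_inner (\<lambda>t. f t - g t) g - (L2_norm f)^2 / 2 + (L2_norm g)^2 / 2 = -((L2_norm (\<lambda>t. f t - g t))^2 / 2)"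
proof -
  note ff = L2_sq_int[OF f] and gg = L2_sq_int[OF g] and fg = L2_prod_int[OF f g]
  have gf: "set_integrable lborel {0..1} (\<lambda>t. g t * f t)" using L2_prod_int[OF g f] .
  have 1: "L2_inner (\<lambda>t. f t - g t) f = L2_inner f f - L2_inner f g"
    unfolding L2_inner_def using set_integral_diff(2)[OF ff fg]
    by (simp add: algebra_simps)
  have 2: "L2_inner (\<lambda>t. f t - g t) g = L2_inner f g - L2_inner g g"
    unfolding L2_inner_def using set_integral_diff(2)[OF fg gg]
    by (simp add: algebra_simps)
  have 3: "L2_inner (\<lambda>t. f t - g t) (\<lambda>t. f t - g t) = L2_inner f f - 2 * L2_inner f g + L2_inner g g"
  proof -
    have i1: "set_integrable lborel {0..1} (\<lambda>t. f t * f t - 2 * (f t * g t))"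
      using ff fg by (intro set_integral_diff(1) set_integrable_mult_right) auto
    have "(LINT t:{0..1}|lborel. (f t - g t) * (f t - g t))
        = (LINT t:{0..1}|lborel. (f t * f t - 2 * (f t * g t)) + g t * g t)"
      by (simp add: algebra_simps power2_eq_square)
    also have "\<dots> = (LINT t:{0..1}|lborel. f t * f t - 2 * (f t * g t)) + (LINT t:{0..1}|lborel. g t * g t)"
      using set_integral_add(2)[OF i1 gg] .
    also have "(LINT t:{0..1}|lborel. f t * f t - 2 * (f t * g t)) = (LINT t:{0..1}|lborel. f t * f t) - 2 * (LINT t:{0..1}|lborel. f t * g t)"
      using set_integral_diff(2)[OF ff set_integrable_mult_right[OF fg, of 2]] by simp
    finally show ?thesis unfolding L2_inner_def .
  qed
  show "L2_inner (\<lambda>t. f t - g t) f - (L2_norm f)^2 / 2 + (L2_norm g)^2 / 2 = (L2_norm (\<lambda>t. f t - g t))^2 / 2"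
    unfolding L2_norm_sq 1 3 by (simp add: field_simps)
  show "L2_inner (\<lambda>t. f t - g t) g - (L2_norm f)^2 / 2 + (L2_norm g)^2 / 2 = -((L2_norm (\<lambda>t. f t - g t))^2 / 2)"
    unfolding L2_norm_sq 2 3 by (simp add: field_simps)
qed

lemma diff_L2:
  assumes f: "f \<in> L2_01" and g: "g \<in> L2_01"
  shows "(\<lambda>t. f t - g t) \<in> L2_01"
proof -
  have [measurable]: "f \<in> borel_measurable lborel" "g \<in> borel_measurable lborel"
    using assms unfolding L2_01_def by auto
  note ff = L2_sq_int[OF f] and gg = L2_sq_int[OF g] and fg = L2_prod_int[OF f g]
  have i1: "set_integrable lborel {0..1} (\<lambda>t. f t * f t - 2 * (f t * g t) + g t * g t)"
    using ff fg gg by (intro set_integral_add(1) set_integral_diff(1) set_integrable_mult_right) auto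
  moreover have "(\<lambda>t. f t * f t - 2 * (f t * g t) + g t * g t) = (\<lambda>t. (f t - g t)^2)"
    by (simp add: algebra_simps power2_eq_square fun_eq_iff)
  ultimately show ?thesis unfolding L2_01_def by auto
qed

theorem proposition4:
  fixes M :: "'a measure" and Y :: "'a \<Rightarrow> bool"
    and W :: "(real \<Rightarrow> real) \<Rightarrow> 'a \<Rightarrow> real"
    and f g :: "real \<Rightarrow> real" and \<epsilon> :: real
  assumes "prob_space M"
    and "f \<in> L2_01" and "g \<in> L2_01"
    and "L2_norm (\<lambda>t. f t - g t) > 0"
    and "Y \<in> measurable M (count_space UNIV)"
    and "prob_space.prob M {\<omega> \<in> space M. Y \<omega>} = 1 / 2"
    and "isonormal_L2_01 M W"
    and "prob_space.indep_set M
           {Y -` A \<inter> space M | A. A \<in> sets (count_space UNIV)}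
           {(\<lambda>\<omega>. restrict (\<lambda>h. W h \<omega>) L2_01) -` B \<inter> space M | B.
              B \<in> sets (PiM L2_01 (\<lambda>_. borel))}"
    and "\<epsilon> < 1 / 4"
  shows "prob_space.prob M {\<omega> \<in> space M. \<bar>eta_X f g Y W \<omega> - 1 / 2\<bar> \<le> \<epsilon>}
           \<ge> 1 / sqrt (2 * pi) *
             min (\<epsilon> / L2_norm (\<lambda>t. f t - g t)
                    * exp (- (1 + L2_norm (\<lambda>t. f t - g t) / 2)\<^sup>2 / 2))
                 (exp (- 1 / 2) / 2)"
proof -
  interpret prob_space M by (rule assms(1))
  note f = assms(2) and g = assms(3)
  define h where "h = (\<lambda>t. f t - g t)"
  define D where "D = L2_norm h"
  define E where "E = exp (- (1 + D / 2)\<^sup>2 / 2)"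
  have hL2: "h \<in> L2_01" unfolding h_def using diff_L2[OF f g] .
  have Dpos: "D > 0" using assms(4) unfolding D_def h_def .
  have dist: "distributed M lborel (W h) (\<lambda>x. ennreal (normal_density 0 D x))"
    using assms(7) hL2 Dpos unfolding isonormal_L2_01_def D_def by auto
  have Wm[measurable]: "W h \<in> borel_measurable M"
    using distributed_measurable[OF dist] by simp
  have Ym[measurable]: "Y \<in> measurable M (count_space UNIV)" by (rule assms(5))
  have Epos: "E > 0" unfolding E_def by simp
  show ?thesis
  proof (cases "\<epsilon> \<le> 0")
    case True
    have "min (\<epsilon> / D * E) (exp (- 1 / 2) / 2) \<le> 0"
      using True Dpos Epos by (simp add: min_le_iff_disj divide_nonpos_pos mult_nonpos_nonneg)
    then have "1 / sqrt (2 * pi) * min (\<epsilon> / D * E) (exp (- 1 / 2) / 2) \<le> 0"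
      by (simp add: divide_nonpos_pos)
    then show ?thesis unfolding D_def E_def h_def by (meson measure_nonneg order_trans)
  next
    case False
    then have epos: "\<epsilon> > 0" by simp
    define \<beta> where "\<beta> = min (2 * \<epsilon>) D"
    have bpos: "\<beta> > 0" unfolding \<beta>_def using epos Dpos by simp
    have eta_eq: "eta_X f g Y W \<omega> = (let z = (if Y \<omega> then D\<^sup>2 / 2 else - (D\<^sup>2 / 2)) + W h \<omega> in exp z / (1 + exp z))"
      for \<omega>
    proof -
      have "int_dX f g Y W h \<omega> - (L2_norm f)\<^sup>2 / 2 + (L2_norm g)\<^sup>2 / 2
          = (if Y \<omega> then D\<^sup>2 / 2 else - (D\<^sup>2 / 2)) + W h \<omega>"
        using L2_ident[OF f g] unfolding int_dX_def D_def h_def by auto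
      then show ?thesis unfolding eta_X_def h_def by simp
    qed
    have gauss: "prob (W h -` {c - \<beta> .. c + \<beta>} \<inter> space M) \<ge> 2 * \<beta> * (E / (sqrt (2 * pi) * D))"
      if c: "\<bar>c\<bar> = D\<^sup>2 / 2" for c
    proof -
      define m where "m = E / (sqrt (2 * pi) * D)"
      have m0: "m \<ge> 0" unfolding m_def using Epos Dpos by simp
      have low: "normal_density 0 D x \<ge> m" if x: "x \<in> {c - \<beta> .. c + \<beta>}" for x
      proof -
        have "\<bar>x\<bar> \<le> \<bar>c\<bar> + \<beta>" using x by auto
        also have "\<dots> \<le> D * (D / 2 + 1)" using c unfolding \<beta>_def by (simp add: power2_eq_square algebra_simps)
        finally have ax: "\<bar>x\<bar> \<le> D * (D / 2 + 1)" .
        have "x\<^sup>2 \<le> (D * (D / 2 + 1))\<^sup>2"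
          using ax by (metis abs_ge_zero order_trans power2_abs power_mono)
        then have "x\<^sup>2 / (2 * D\<^sup>2) \<le> (D * (D / 2 + 1))\<^sup>2 / (2 * D\<^sup>2)"
          using Dpos by (simp add: divide_right_mono)
        also have "\<dots> = (1 + D / 2)\<^sup>2 / 2" using Dpos by (simp add: power2_eq_square field_simps)
        finally have "exp (- (1 + D / 2)\<^sup>2 / 2) \<le> exp (- x\<^sup>2 / (2 * D\<^sup>2))" by simp
        moreover have "sqrt (2 * pi * D\<^sup>2) = sqrt (2 * pi) * D"
          using Dpos by (simp add: real_sqrt_mult)
        ultimately show ?thesis
          unfolding normal_density_def m_def E_def using Dpos
          by (simp add: divide_right_mono)
      qed
      have "ennreal (m * (2 * \<beta>)) = ennreal m * emeasure lborel {c - \<beta> .. c + \<beta>}"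
        using bpos m0 by (simp add: ennreal_mult)
      also have "\<dots> = (\<integral>\<^sup>+x. ennreal m * indicator {c - \<beta> .. c + \<beta>} x \<partial>lborel)"
        by (simp add: nn_integral_cmult_indicator)
      also have "\<dots> \<le> (\<integral>\<^sup>+x. ennreal (normal_density 0 D x) * indicator {c - \<beta> .. c + \<beta>} x \<partial>lborel)"
        by (intro nn_integral_mono) (auto simp: indicator_def low)
      also have "\<dots> = emeasure M (W h -` {c - \<beta> .. c + \<beta>} \<inter> space M)"
        using distributed_emeasure[OF dist] by simp
      also have "\<dots> = ennreal (prob (W h -` {c - \<beta> .. c + \<beta>} \<inter> space M))"
        by (rule emeasure_eq_measure)
      finally have "m * (2 * \<beta>) \<le> prob (W h -` {c - \<beta> .. c + \<beta>} \<inter> space M)"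
        by (simp add: ennreal_le_iff)
      then show ?thesis unfolding m_def by (simp add: algebra_simps)
    qed
    define A where "A = Y -` {True} \<inter> space M"
    define A' where "A' = Y -` {False} \<inter> space M"
    define B1 where "B1 = W h -` {- (D\<^sup>2 / 2) - \<beta> .. - (D\<^sup>2 / 2) + \<beta>} \<inter> space M"
    define B2 where "B2 = W h -` {D\<^sup>2 / 2 - \<beta> .. D\<^sup>2 / 2 + \<beta>} \<inter> space M"
    have pB1: "prob B1 \<ge> 2 * \<beta> * (E / (sqrt (2 * pi) * D))" unfolding B1_def by (rule gauss) simp
    have pB2: "prob B2 \<ge> 2 * \<beta> * (E / (sqrt (2 * pi) * D))" unfolding B2_def by (rule gauss) simp
    have pA: "prob A = 1 / 2"
    proof -
      have "Y -` {True} \<inter> space M = {\<omega> \<in> space M. Y \<omega>}" by auto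
      then show ?thesis using assms(6) A_def by simp
    qed
    have Aev: "A \<in> sets M" unfolding A_def by (rule measurable_sets[OF Ym]) simp
    have A'eq: "A' = space M - A" unfolding A_def A'_def by auto
    have pA': "prob A' = 1 / 2" unfolding A'eq using pA Aev by (simp add: prob_compl)
    have Bfam: "W h -` I \<inter> space M \<in> {(\<lambda>\<omega>. restrict (\<lambda>h. W h \<omega>) L2_01) -` B \<inter> space M | B.
              B \<in> sets (PiM L2_01 (\<lambda>_. borel))}" if "I \<in> sets borel" for I
    proof -
      have "(\<lambda>x. x h) -` I \<inter> space (PiM L2_01 (\<lambda>_. borel)) \<in> sets (PiM L2_01 (\<lambda>_. borel))"
        using measurable_sets[OF measurable_component_singleton[OF hL2] that] by simp
      moreover have "W h -` I \<inter> space M = (\<lambda>\<omega>. restrict (\<lambda>h. W h \<omega>) L2_01) -` ((\<lambda>x. x h) -` I \<inter> space (PiM L2_01 (\<lambda>_. borel))) \<inter> space M"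
        using hL2 by (auto simp: space_PiM PiE_iff)
      ultimately show ?thesis by blast
    qed
    have Afam: "Y -` {b} \<inter> space M \<in> {Y -` A \<inter> space M | A. A \<in> sets (count_space UNIV)}" for b
      by auto
    have pAB1: "prob (A \<inter> B1) = prob A * prob B1"
      unfolding A_def B1_def by (rule indep_setD[OF assms(8) Afam Bfam]) simp
    have pAB2: "prob (A' \<inter> B2) = prob A' * prob B2"
      unfolding A'_def B2_def by (rule indep_setD[OF assms(8) Afam Bfam]) simp
    define S where "S = {\<omega> \<in> space M. \<bar>eta_X f g Y W \<omega> - 1 / 2\<bar> \<le> \<epsilon>}"
    have Sev: "S \<in> sets M"
    proof -
      have [measurable]: "Measurable.pred M Y" unfolding pred_def using Ym by simp
      have etam: "(\<lambda>\<omega>. eta_X f g Y W \<omega>) \<in> borel_measurable M"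
        unfolding eta_eq Let_def by measurable
      show ?thesis unfolding S_def using etam by measurable
    qed
    have sub: "(A \<inter> B1) \<union> (A' \<inter> B2) \<subseteq> S"
    proof
      fix \<omega> assume w: "\<omega> \<in> (A \<inter> B1) \<union> (A' \<inter> B2)"
      define z where "z = (if Y \<omega> then D\<^sup>2 / 2 else - (D\<^sup>2 / 2)) + W h \<omega>"
      have "\<bar>z\<bar> \<le> \<beta>" using w unfolding z_def A_def A'_def B1_def B2_def by auto
      then have "\<bar>z\<bar> \<le> 2 * \<epsilon>" unfolding \<beta>_def by simp
      then have "\<bar>exp z / (1 + exp z) - 1/2\<bar> \<le> \<epsilon>" using sig_bound[of z] by simp
      moreover have "\<omega> \<in> space M" using w unfolding A_def A'_def by auto
      ultimately show "\<omega> \<in> S" unfolding S_def eta_eq z_def Let_def by simp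
    qed
    have disj: "(A \<inter> B1) \<inter> (A' \<inter> B2) = {}" unfolding A_def A'_def by auto
    have B1ev: "B1 \<in> sets M" unfolding B1_def by (rule measurable_sets[OF Wm]) simp
    have B2ev: "B2 \<in> sets M" unfolding B2_def by (rule measurable_sets[OF Wm]) simp
    have A'ev: "A' \<in> sets M" unfolding A'_def by (rule measurable_sets[OF Ym]) simp
    have "prob S \<ge> prob ((A \<inter> B1) \<union> (A' \<inter> B2))"
      by (rule finite_measure_mono[OF sub Sev])
    also have "prob ((A \<inter> B1) \<union> (A' \<inter> B2)) = prob (A \<inter> B1) + prob (A' \<inter> B2)"
      using Aev A'ev B1ev B2ev disj by (intro finite_measure_Union) auto
    finally have "prob S \<ge> (prob B1 + prob B2) / 2"
      unfolding pAB1 pAB2 pA pA' by simp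
    then have main: "prob S \<ge> 2 * \<beta> * (E / (sqrt (2 * pi) * D))" by (rule avg_le[OF pB1 pB2])
    have sp: "sqrt (2 * pi) > 0" by simp
    have fin: "1 / sqrt (2 * pi) * min (\<epsilon> / D * E) (exp (- 1 / 2) / 2) \<le> 2 * \<beta> * (E / (sqrt (2 * pi) * D))"
    proof (cases "2 * \<epsilon> \<le> D")
      case True
      then have b: "\<beta> = 2 * \<epsilon>" unfolding \<beta>_def by simp
      have "1 / sqrt (2 * pi) * min (\<epsilon> / D * E) (exp (- 1 / 2) / 2) \<le> 1 / sqrt (2 * pi) * (\<epsilon> / D * E)"
        using sp by (intro mult_left_mono) auto
      also have "\<dots> \<le> 4 * (1 / sqrt (2 * pi) * (\<epsilon> / D * E))"
        using sp epos Dpos Epos by (intro le4) simp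
      also have "\<dots> = 2 * \<beta> * (E / (sqrt (2 * pi) * D))" unfolding b by (simp add: field_simps)
      finally show ?thesis .
    next
      case False
      then have b: "\<beta> = D" and Dsm: "D < 1 / 2" unfolding \<beta>_def using assms(9) by auto
      have "(1 + D / 2)\<^sup>2 \<le> (5 / 4)\<^sup>2" using Dsm Dpos by (intro power_mono) auto
      then have "exp (- (25 / 32)) \<le> E" unfolding E_def by (simp add: power2_eq_square)
      moreover have "exp (- 1 / 2) \<le> 4 * exp (- (25 / 32 :: real))"
      proof -
        have "1 - 9 / 32 \<le> exp (- (9 / 32 :: real))" using exp_ge_add_one_self[of "- (9/32) :: real"] by simp
        then have "exp (- 1 / 2) * 1 \<le> exp (- 1 / 2) * (4 * exp (- (9 / 32 :: real)))"
          by (intro mult_left_mono) auto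
        also have "\<dots> = 4 * exp (- (25 / 32))" by (simp add: exp_add[symmetric])
        finally show ?thesis by simp
      qed
      ultimately have e: "exp (- 1 / 2) / 2 \<le> 2 * E" by simp
      have "1 / sqrt (2 * pi) * min (\<epsilon> / D * E) (exp (- 1 / 2) / 2) \<le> 1 / sqrt (2 * pi) * (2 * E)"
        using sp e by (intro mult_left_mono) auto
      also have "\<dots> = 2 * \<beta> * (E / (sqrt (2 * pi) * D))" unfolding b using Dpos by (simp add: field_simps)
      finally show ?thesis .
    qed
    show ?thesis using order_trans[OF fin main] unfolding S_def D_def E_def h_def .
  qed
qed

end
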